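(* Let $\mathcal A$ be a set of graphs, and let $\mathcal C$ be a bridge-stable class of connected graphs each of which is bridge-addable in $\mathcal A$. Then for $R_n\in_u\mathcal A$ (with $\mathcal A_n\ne\emptyset$), $\kappa^+(R_n,\mathcal C)$ is stochastically dominated by $1+\mathrm{Po}(1)$.
   Context: $\mathcal A_n$: graphs in $\mathcal A$ on vertex set $[n]$; $R_n\in_u\mathcal A$: uniform on $\mathcal A_n$. A connected graph $H$ is bridge-addable in $\mathcal A$ if whenever $G\in\mathcal A$ has a component isomorphic to $H$ and $e$ is a non-edge between that component and the rest of $G$, $G+e\in\mathcal A$. $\mathcal C$ bridge-stable: joining by an edge two disjoint graphs both in $\mathcal C$ yields a graph in $\mathcal C$, and joining by an edge two disjoint graphs exactly one of which is in $\mathcal C$ yields a graph not in $\mathcal C$. $\kappa(G,\mathcal C)$: number of components of $G$ in $\mathcal C$; $\kappa^+(G,\mathcal C)=\kappa(G,\mathcal C)$ if every component of $G$ is in $\mathcal C$, and $\kappa(G,\mathcal C)+1$ otherwise. $X$ is stochastically dominated by $Y$ if $\mathbb P(X>t)\le\mathbb P(Y>t)$ for all $t$. *)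

theory Defs
  imports "HOL-Probability.Probability"
begin

text \<open>A (finite, simple, labelled) graph is a pair (V, E) of a vertex set V of naturals
  and a set E of 2-element subsets of V.\<close>
type_synonym graph = "nat set \<times> nat set set"

definition verts :: "graph \<Rightarrow> nat set" where "verts G = fst G"
definition edges :: "graph \<Rightarrow> nat set set" where "edges G = snd G"

definition is_graph :: "graph \<Rightarrow> bool" where
  "is_graph G \<longleftrightarrow> finite (verts G) \<and>
     (\<forall>e\<in>edges G. \<exists>u v. u \<noteq> v \<and> u \<in> verts G \<and> v \<in> verts G \<and> e = {u, v})"

definition reach :: "graph \<Rightarrow> nat \<Rightarrow> nat \<Rightarrow> bool" where
  "reach G = (\<lambda>u v. {u, v} \<in> edges G)\<^sup>*\<^sup>*"

definition connected_graph :: "graph \<Rightarrow> bool" where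
  "connected_graph G \<longleftrightarrow> verts G \<noteq> {} \<and> (\<forall>u\<in>verts G. \<forall>v\<in>verts G. reach G u v)"

definition induced :: "graph \<Rightarrow> nat set \<Rightarrow> graph" where
  "induced G S = (S, {e \<in> edges G. e \<subseteq> S})"

definition components :: "graph \<Rightarrow> graph set" where
  "components G = {induced G {v \<in> verts G. reach G u v} | u. u \<in> verts G}"

definition graph_iso :: "graph \<Rightarrow> graph \<Rightarrow> bool" where
  "graph_iso G H \<longleftrightarrow> (\<exists>f. bij_betw f (verts G) (verts H) \<and>
     (\<forall>u\<in>verts G. \<forall>v\<in>verts G. {u, v} \<in> edges G \<longleftrightarrow> {f u, f v} \<in> edges H))"

definition add_edge :: "graph \<Rightarrow> nat \<Rightarrow> nat \<Rightarrow> graph" where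
  "add_edge G u v = (verts G, insert {u, v} (edges G))"

definition join_by_edge :: "graph \<Rightarrow> graph \<Rightarrow> nat \<Rightarrow> nat \<Rightarrow> graph" where
  "join_by_edge G H u v = (verts G \<union> verts H, insert {u, v} (edges G \<union> edges H))"

definition iso_closed :: "graph set \<Rightarrow> bool" where
  "iso_closed \<C> \<longleftrightarrow> (\<forall>G H. G \<in> \<C> \<longrightarrow> is_graph H \<longrightarrow> graph_iso G H \<longrightarrow> H \<in> \<C>)"

definition bridge_addable :: "graph set \<Rightarrow> graph \<Rightarrow> bool" where
  "bridge_addable \<A> H \<longleftrightarrow> connected_graph H \<and>
     (\<forall>G\<in>\<A>. \<forall>K\<in>components G. graph_iso K H \<longrightarrow>
        (\<forall>u\<in>verts K. \<forall>v\<in>verts G - verts K. {u, v} \<notin> edges G \<longrightarrow> add_edge G u v \<in> \<A>))"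

definition bridge_stable :: "graph set \<Rightarrow> bool" where
  "bridge_stable \<C> \<longleftrightarrow> (\<forall>G H u v. is_graph G \<longrightarrow> is_graph H \<longrightarrow>
       verts G \<inter> verts H = {} \<longrightarrow> u \<in> verts G \<longrightarrow> v \<in> verts H \<longrightarrow>
       ((G \<in> \<C> \<and> H \<in> \<C> \<longrightarrow> join_by_edge G H u v \<in> \<C>) \<and>
        ((G \<in> \<C>) \<noteq> (H \<in> \<C>) \<longrightarrow> join_by_edge G H u v \<notin> \<C>)))"

definition kappa :: "graph \<Rightarrow> graph set \<Rightarrow> nat" where
  "kappa G \<C> = card {K \<in> components G. K \<in> \<C>}"

definition kappa_plus :: "graph \<Rightarrow> graph set \<Rightarrow> nat" where
  "kappa_plus G \<C> = (if components G \<subseteq> \<C> then kappa G \<C> else kappa G \<C> + 1)"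

definition slice :: "graph set \<Rightarrow> nat \<Rightarrow> graph set" where
  "slice \<A> n = {G \<in> \<A>. verts G = {1..n}}"

end

theory Submission
  imports Defs
begin

abbreviation RR :: "nat set set \<Rightarrow> nat \<Rightarrow> nat \<Rightarrow> bool" where
  "RR E \<equiv> (\<lambda>a b. {a, b} \<in> E)"

lemma RR_sym: "(RR E)\<^sup>*\<^sup>* x y \<Longrightarrow> (RR E)\<^sup>*\<^sup>* y x"
proof (induction rule: rtranclp_induct)
  case base then show ?case by simp
next
  case (step y z)
  have "RR E z y" using step(2) by (simp add: insert_commute)
  then show ?case using step(3) by (rule converse_rtranclp_into_rtranclp)
qed

lemma RR_mono:
  assumes "E \<subseteq> F" "(RR E)\<^sup>*\<^sup>* x y"
  shows "(RR F)\<^sup>*\<^sup>* x y"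
  using assms(2)
proof (induction rule: rtranclp_induct)
  case base then show ?case by simp
next
  case (step y z)
  then show ?case using assms(1) by (meson rtranclp.rtrancl_into_rtrancl subsetD)
qed

lemma RR_cut:
  assumes "(RR E)\<^sup>*\<^sup>* x y"
  shows "(RR (E - {e}))\<^sup>*\<^sup>* x y \<or> (\<exists>z\<in>e. (RR (E - {e}))\<^sup>*\<^sup>* z y)"
  using assms
proof (induction rule: converse_rtranclp_induct)
  case base then show ?case by simp
next
  case (step a z)
  show ?case
  proof (cases "{a,z} = e")
    case True
    then show ?thesis using step(3) by auto
  next
    case False
    then have "RR (E - {e}) a z" using step(1) by simp
    then show ?thesis using step(3) by (meson converse_rtranclp_into_rtranclp)
  qed
qed

lemma reach_sym: "reach G x y \<Longrightarrow> reach G y x"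
  unfolding reach_def by (rule RR_sym)

lemma reach_trans: "reach G x y \<Longrightarrow> reach G y z \<Longrightarrow> reach G x z"
  unfolding reach_def by (rule rtranclp_trans)

lemma reach_refl[simp]: "reach G x x"
  unfolding reach_def by simp

lemma reach_in_V:
  assumes g: "is_graph G" and r: "reach G x y" and x: "x \<in> verts G"
  shows "y \<in> verts G"
  using r[unfolded reach_def] x
proof (induction rule: rtranclp_induct)
  case base then show ?case by simp
next
  case (step y z)
  then obtain a b where "a \<noteq> b" "a \<in> verts G" "b \<in> verts G" "{y,z} = {a,b}"
    using g unfolding is_graph_def by blast
  then show ?case by (metis doubleton_eq_iff)
qed

lemma edge_verts:
  assumes g: "is_graph G" and e: "{x,y} \<in> edges G"
  shows "x \<in> verts G" "y \<in> verts G" "x \<noteq> y"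
proof -
  obtain a b where "a \<noteq> b" "a \<in> verts G" "b \<in> verts G" "{x,y} = {a,b}"
    using g e unfolding is_graph_def by blast
  then show "x \<in> verts G" "y \<in> verts G" "x \<noteq> y" by (auto simp: doubleton_eq_iff)
qed

definition cl :: "graph \<Rightarrow> nat \<Rightarrow> nat set" where
  "cl G u = {v \<in> verts G. reach G u v}"

definition cls :: "graph \<Rightarrow> nat set set" where
  "cls G = cl G ` verts G"

lemma components_cls: "components G = induced G ` cls G"
  unfolding components_def cls_def cl_def by auto

lemma cl_self: "u \<in> verts G \<Longrightarrow> u \<in> cl G u"
  unfolding cl_def by simp

lemma cl_eq: "x \<in> cl G u \<Longrightarrow> cl G x = cl G u"
  unfolding cl_def by (auto intro: reach_trans reach_sym)

lemma cl_eq_iff: "u \<in> verts G \<Longrightarrow> cl G u = cl G v \<longleftrightarrow> reach G u v \<or> (u = v)"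
  unfolding cl_def by (auto intro: reach_trans reach_sym)

lemma cls_disj: "S \<in> cls G \<Longrightarrow> T \<in> cls G \<Longrightarrow> x \<in> S \<Longrightarrow> x \<in> T \<Longrightarrow> S = T"
  unfolding cls_def by (metis cl_eq imageE)

lemma cls_ne: "S \<in> cls G \<Longrightarrow> S \<noteq> {}"
  unfolding cls_def using cl_self by blast

lemma cls_sub: "S \<in> cls G \<Longrightarrow> S \<subseteq> verts G"
  unfolding cls_def cl_def by auto

lemma finite_cls: "finite (verts G) \<Longrightarrow> finite (cls G)"
  unfolding cls_def by simp

lemma card_cls: "finite (verts G) \<Longrightarrow> card (cls G) \<le> card (verts G)"
  unfolding cls_def by (rule card_image_le)

lemma inj_induced: "inj_on (induced G) X"
  by (rule inj_onI) (metis fst_conv induced_def)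

definition good :: "graph set \<Rightarrow> graph \<Rightarrow> nat set set" where
  "good \<C> G = {S \<in> cls G. induced G S \<in> \<C>}"

lemma kappa_plus_good:
  "kappa_plus G \<C> = card (good \<C> G) + (if good \<C> G = cls G then 0 else 1)"
proof -
  have k: "kappa G \<C> = card (good \<C> G)"
  proof -
    have "{K \<in> components G. K \<in> \<C>} = induced G ` good \<C> G"
      unfolding components_cls good_def by auto
    then show ?thesis unfolding kappa_def
      by (simp add: card_image inj_induced)
  qed
  have "components G \<subseteq> \<C> \<longleftrightarrow> good \<C> G = cls G"
    unfolding components_cls good_def by auto
  then show ?thesis unfolding kappa_plus_def k by simp
qed

lemma kappa_plus_le_cls:
  assumes "finite (verts G)"
  shows "kappa_plus G \<C> \<le> card (cls G)"
proof -
  have f: "finite (cls G)" using assms by (rule finite_cls)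
  have sub: "good \<C> G \<subseteq> cls G" unfolding good_def by auto
  show ?thesis
  proof (cases "good \<C> G = cls G")
    case True then show ?thesis by (simp add: kappa_plus_good)
  next
    case False
    then have "card (good \<C> G) < card (cls G)" using sub f by (meson psubsetI psubset_card_mono)
    then show ?thesis using False by (simp add: kappa_plus_good)
  qed
qed

lemma verts_add[simp]: "verts (add_edge G u v) = verts G"
  and edges_add[simp]: "edges (add_edge G u v) = insert {u,v} (edges G)"
  unfolding add_edge_def verts_def edges_def by auto

lemma reach_add:
  "reach (add_edge G u v) a b \<longleftrightarrow>
     reach G a b \<or> (reach G a u \<and> reach G v b) \<or> (reach G a v \<and> reach G u b)"
proof
  assume "reach (add_edge G u v) a b"
  then have "(RR (insert {u,v} (edges G)))\<^sup>*\<^sup>* a b" unfolding reach_def by simp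
  then show "reach G a b \<or> (reach G a u \<and> reach G v b) \<or> (reach G a v \<and> reach G u b)"
  proof (induction rule: rtranclp_induct)
    case base then show ?case by simp
  next
    case (step y z)
    show ?case
    proof (cases "{y,z} \<in> edges G")
      case True
      then have e: "reach G y z" unfolding reach_def by auto
      show ?thesis using step(3) e reach_trans by blast
    next
      case False
      then have "{y,z} = {u,v}" using step(2) by simp
      then have "(y = u \<and> z = v) \<or> (y = v \<and> z = u)" by (auto simp: doubleton_eq_iff)
      then show ?thesis using step(3) reach_trans reach_refl by blast
    qed
  qed
next
  have m: "reach G x y \<Longrightarrow> reach (add_edge G u v) x y" for x y
    unfolding reach_def by (rule RR_mono[of "edges G"]) auto
  have uv: "reach (add_edge G u v) u v" "reach (add_edge G u v) v u"
    unfolding reach_def by (auto simp: insert_commute)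
  assume "reach G a b \<or> (reach G a u \<and> reach G v b) \<or> (reach G a v \<and> reach G u b)"
  then show "reach (add_edge G u v) a b" using m uv reach_trans by meson
qed

lemma verts_induced[simp]: "verts (induced G S) = S"
  and edges_induced[simp]: "edges (induced G S) = {e \<in> edges G. e \<subseteq> S}"
  unfolding induced_def verts_def edges_def by auto

locale addctx =
  fixes G :: graph and u v :: nat
  assumes g: "is_graph G" and u: "u \<in> verts G" and v: "v \<in> verts G"
    and nr: "\<not> reach G u v"
begin

abbreviation "H \<equiv> add_edge G u v"
abbreviation "Su \<equiv> cl G u"
abbreviation "Sv \<equiv> cl G v"

lemma Su_ne_Sv: "Su \<noteq> Sv"
  using cl_eq_iff[OF u] nr reach_refl by metis

lemma u_ne_v: "u \<noteq> v" using nr by auto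

lemma disj: "Su \<inter> Sv = {}"
proof (rule ccontr)
  assume "Su \<inter> Sv \<noteq> {}"
  then obtain x where "x \<in> Su" "x \<in> Sv" by blast
  then have "cl G x = Su" "cl G x = Sv" by (auto dest: cl_eq)
  then show False using Su_ne_Sv by simp
qed

lemma reach_left: assumes ab: "reach G a b" shows "reach G a c = reach G b c"
  using reach_trans[OF reach_sym[OF ab]] reach_trans[OF ab] by blast

lemma cl_H: assumes w: "w \<in> verts G"
  shows "cl H w = (if w \<in> Su \<union> Sv then Su \<union> Sv else cl G w)"
proof (cases "w \<in> Su")
  case True
  then have wu: "reach G w u" unfolding cl_def using reach_sym by blast
  have nwv: "\<not> reach G w v" using nr reach_left[OF wu] by blast
  have "x \<in> cl H w \<longleftrightarrow> x \<in> Su \<union> Sv" for x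
    unfolding cl_def reach_add using wu nwv reach_left[OF wu] by auto
  then show ?thesis using True by auto
next
  case F1: False
  show ?thesis
  proof (cases "w \<in> Sv")
    case True
    then have wv: "reach G w v" unfolding cl_def using reach_sym by blast
    have nwu: "\<not> reach G w u" using nr reach_left[OF wv] reach_sym by blast
    have "x \<in> cl H w \<longleftrightarrow> x \<in> Su \<union> Sv" for x
      unfolding cl_def reach_add using wv nwu reach_left[OF wv] by auto
    then show ?thesis using True by auto
  next
    case False
    have nwu: "\<not> reach G w u"
    proof
      assume "reach G w u" then have "reach G u w" by (rule reach_sym)
      then show False using F1 w unfolding cl_def by simp
    qed
    have nwv: "\<not> reach G w v"
    proof
      assume "reach G w v" then have "reach G v w" by (rule reach_sym)
      then show False using False w unfolding cl_def by simp
    qed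
    have "x \<in> cl H w \<longleftrightarrow> x \<in> cl G w" for x
      unfolding cl_def reach_add using nwu nwv by auto
    then show ?thesis using F1 False by auto
  qed
qed

lemma cls_H: "cls H = insert (Su \<union> Sv) (cls G - {Su, Sv})"
proof -
  have "cls H = (\<lambda>w. if w \<in> Su \<union> Sv then Su \<union> Sv else cl G w) ` verts G"
    unfolding cls_def using cl_H by simp
  also have "\<dots> = insert (Su \<union> Sv) (cls G - {Su, Sv})"
  proof (rule set_eqI)
    fix S
    show "S \<in> (\<lambda>w. if w \<in> Su \<union> Sv then Su \<union> Sv else cl G w) ` verts G \<longleftrightarrow>
          S \<in> insert (Su \<union> Sv) (cls G - {Su, Sv})"
    proof
      assume "S \<in> (\<lambda>w. if w \<in> Su \<union> Sv then Su \<union> Sv else cl G w) ` verts G"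
      then obtain w where w: "w \<in> verts G" "S = (if w \<in> Su \<union> Sv then Su \<union> Sv else cl G w)" by auto
      show "S \<in> insert (Su \<union> Sv) (cls G - {Su, Sv})"
      proof (cases "w \<in> Su \<union> Sv")
        case True then show ?thesis using w by simp
      next
        case False
        then have "cl G w \<noteq> Su" "cl G w \<noteq> Sv" using cl_self[OF w(1)] by auto
        then show ?thesis using w False unfolding cls_def by auto
      qed
    next
      assume "S \<in> insert (Su \<union> Sv) (cls G - {Su, Sv})"
      then show "S \<in> (\<lambda>w. if w \<in> Su \<union> Sv then Su \<union> Sv else cl G w) ` verts G"
      proof
        assume "S = Su \<union> Sv"
        then show ?thesis using u cl_self[OF u] by (intro image_eqI[of _ _ u]) auto
      next
        assume "S \<in> cls G - {Su, Sv}"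
        then obtain w where w: "w \<in> verts G" "S = cl G w" "cl G w \<noteq> Su" "cl G w \<noteq> Sv"
          unfolding cls_def by auto
        have "w \<notin> Su \<union> Sv" using w(3,4) by (auto dest: cl_eq)
        then show ?thesis using w by (intro image_eqI[of _ _ w]) auto
      qed
    qed
  qed
  finally show ?thesis .
qed

lemma union_notin: "Su \<union> Sv \<notin> cls G"
proof
  assume "Su \<union> Sv \<in> cls G"
  moreover have "Su \<in> cls G" using u unfolding cls_def by simp
  ultimately have "Su \<union> Sv = Su" using cls_disj cl_self[OF u] by blast
  then have "v \<in> Su" using cl_self[OF v] by blast
  then show False using cl_eq Su_ne_Sv by metis
qed

lemma induced_H_other:
  assumes "S \<in> cls G - {Su, Sv}"
  shows "induced H S = induced G S"
proof -
  have "u \<notin> S"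
  proof
    assume "u \<in> S"
    moreover have "Su \<in> cls G" using u unfolding cls_def by simp
    ultimately have "S = Su" using cls_disj cl_self[OF u] assms by blast
    then show False using assms by simp
  qed
  then show ?thesis unfolding induced_def by auto
qed

lemma induced_H_union:
  "induced H (Su \<union> Sv) = join_by_edge (induced G Su) (induced G Sv) u v"
proof -
  have "{e \<in> insert {u,v} (edges G). e \<subseteq> Su \<union> Sv} =
        insert {u,v} ({e \<in> edges G. e \<subseteq> Su} \<union> {e \<in> edges G. e \<subseteq> Sv})"
  proof -
    have uv: "{u,v} \<subseteq> Su \<union> Sv" using cl_self[OF u] cl_self[OF v] by auto
    have "e \<subseteq> Su \<or> e \<subseteq> Sv" if e: "e \<in> edges G" "e \<subseteq> Su \<union> Sv" for e
    proof -
      obtain a b where ab: "e = {a,b}" using g e(1) unfolding is_graph_def by blast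
      have r: "reach G a b" using e(1) ab unfolding reach_def by auto
      have "\<not> (a \<in> Su \<and> b \<in> Sv)"
      proof
        assume "a \<in> Su \<and> b \<in> Sv"
        then have ua: "reach G u a" and vb: "reach G v b" unfolding cl_def by auto
        have "reach G u b" using ua r by (rule reach_trans)
        then have "reach G u v" using reach_sym[OF vb] by (rule reach_trans)
        then show False using nr by simp
      qed
      moreover have "\<not> (a \<in> Sv \<and> b \<in> Su)"
      proof
        assume "a \<in> Sv \<and> b \<in> Su"
        then have va: "reach G v a" and ub: "reach G u b" unfolding cl_def by auto
        have "reach G u a" using ub reach_sym[OF r] by (rule reach_trans)
        then have "reach G u v" using reach_sym[OF va] by (rule reach_trans)
        then show False using nr by simp
      qed
      ultimately show ?thesis using e(2) ab by auto
    qed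
    then show ?thesis using uv by auto
  qed
  moreover have "induced H (Su \<union> Sv) = (Su \<union> Sv, {e \<in> insert {u,v} (edges G). e \<subseteq> Su \<union> Sv})"
    by (simp add: induced_def)
  moreover have "join_by_edge (induced G Su) (induced G Sv) u v =
     (Su \<union> Sv, insert {u,v} ({e \<in> edges G. e \<subseteq> Su} \<union> {e \<in> edges G. e \<subseteq> Sv}))"
    by (simp add: join_by_edge_def verts_induced edges_induced)
  ultimately show ?thesis by simp
qed

lemma is_graph_H: "is_graph H"
proof -
  have "\<exists>a b. a \<noteq> b \<and> a \<in> verts G \<and> b \<in> verts G \<and> e = {a, b}" if "e \<in> edges H" for e
  proof (cases "e = {u,v}")
    case True then show ?thesis using u v u_ne_v by (intro exI[of _ u] exI[of _ v]) simp
  next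
    case False then have e: "e \<in> edges G" using that by simp
    have "\<forall>e\<in>edges G. \<exists>u v. u \<noteq> v \<and> u \<in> verts G \<and> v \<in> verts G \<and> e = {u, v}"
      using g unfolding is_graph_def by simp
    from bspec[OF this e] show ?thesis .
  qed
  then show ?thesis using g unfolding is_graph_def by simp
qed

lemma is_graph_induced:
  assumes S: "S \<subseteq> verts G"
  shows "is_graph (induced G S)"
proof -
  have "finite (verts G)" using g unfolding is_graph_def by simp
  then have fS: "finite S" using finite_subset[OF S] by simp
  have ex: "\<exists>a b. a \<noteq> b \<and> a \<in> S \<and> b \<in> S \<and> e = {a, b}" if "e \<in> edges G" "e \<subseteq> S" for e
  proof -
    have "\<forall>e\<in>edges G. \<exists>u v. u \<noteq> v \<and> u \<in> verts G \<and> v \<in> verts G \<and> e = {u, v}"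
      using g unfolding is_graph_def by simp
    from bspec[OF this that(1)] obtain a b where ab: "a \<noteq> b" "e = {a,b}" by blast
    have "a \<in> S" "b \<in> S" using that(2) ab(2) by auto
    then show ?thesis using ab by (intro exI[of _ a] exI[of _ b]) simp
  qed
  show ?thesis unfolding is_graph_def verts_induced edges_induced
    using fS ex by simp
qed

end

lemma good_sub: "good \<C> G \<subseteq> cls G" unfolding good_def by auto

context addctx
begin

lemma Su_cls: "Su \<in> cls G" and Sv_cls: "Sv \<in> cls G"
  using u v unfolding cls_def by auto

lemma kp_H:
  assumes bs: "bridge_stable \<C>" and Su_good: "Su \<in> good \<C> G"
  shows "kappa_plus H \<C> + 1 = kappa_plus G \<C>"
proof -
  have fin: "finite (cls G)" using g finite_cls unfolding is_graph_def by blast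
  have finG: "finite (good \<C> G)" using fin good_sub finite_subset by blast
  have SuC: "induced G Su \<in> \<C>" using Su_good unfolding good_def by simp
  have subu: "Su \<subseteq> verts G" and subv: "Sv \<subseteq> verts G" unfolding cl_def by auto
  have join_iff: "join_by_edge (induced G Su) (induced G Sv) u v \<in> \<C> \<longleftrightarrow> induced G Sv \<in> \<C>"
    using bs[unfolded bridge_stable_def, rule_format,
        OF is_graph_induced[OF subu] is_graph_induced[OF subv]] disj cl_self[OF u] cl_self[OF v] SuC
    by auto
  have X_notin: "Su \<union> Sv \<notin> good \<C> G" using union_notin good_sub by blast
  have gH: "good \<C> H = (if Sv \<in> good \<C> G then insert (Su \<union> Sv) (good \<C> G - {Su, Sv})
                         else good \<C> G - {Su})"
  proof -
    have a: "S \<in> good \<C> H \<longleftrightarrow> (S = Su \<union> Sv \<and> induced G Sv \<in> \<C>) \<or>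
                 (S \<in> cls G - {Su, Sv} \<and> induced G S \<in> \<C>)" for S
    proof (cases "S = Su \<union> Sv")
      case True
      then show ?thesis unfolding good_def cls_H using induced_H_union join_iff union_notin by simp
    next
      case False
      show ?thesis
      proof (cases "S \<in> cls G - {Su, Sv}")
        case True
        then show ?thesis using False induced_H_other[OF True] unfolding good_def cls_H by simp
      next
        case F2: False
        then show ?thesis using False unfolding good_def cls_H by auto
      qed
    qed
    show ?thesis
    proof (cases "Sv \<in> good \<C> G")
      case True
      then show ?thesis using a unfolding good_def by auto
    next
      case False
      then have "induced G Sv \<notin> \<C>" using Sv_cls unfolding good_def by auto
      then show ?thesis using a False unfolding good_def by auto
    qed
  qed
  show ?thesis
  proof (cases "Sv \<in> good \<C> G")
    case True
    have c: "card (good \<C> H) + 1 = card (good \<C> G)"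
    proof -
      have "card (good \<C> H) = Suc (card (good \<C> G - {Su, Sv}))"
        using gH True X_notin finG by simp
      moreover have "card (good \<C> G - {Su, Sv}) + 2 = card (good \<C> G)"
      proof -
        have sub: "{Su, Sv} \<subseteq> good \<C> G" using True Su_good by simp
        have c2: "card {Su, Sv} = 2" using Su_ne_Sv by simp
        have "card (good \<C> G - {Su, Sv}) = card (good \<C> G) - card {Su, Sv}"
          using sub by (intro card_Diff_subset) auto
        moreover have "card {Su, Sv} \<le> card (good \<C> G)" using sub finG by (rule card_mono[rotated])
        ultimately show ?thesis using c2 by simp
      qed
      ultimately show ?thesis by simp
    qed
    have e1: "good \<C> H = cls H \<longleftrightarrow> good \<C> G - {Su, Sv} = cls G - {Su, Sv}"
    proof -
      have "Su \<union> Sv \<notin> good \<C> G - {Su, Sv}" "Su \<union> Sv \<notin> cls G - {Su, Sv}"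
        using union_notin good_sub[of \<C> G] by auto
      then show ?thesis using gH True cls_H by (simp add: insert_ident)
    qed
    have e2: "good \<C> G - {Su, Sv} = cls G - {Su, Sv} \<longleftrightarrow> good \<C> G = cls G"
    proof
      assume a: "good \<C> G - {Su, Sv} = cls G - {Su, Sv}"
      show "good \<C> G = cls G"
      proof (rule set_eqI)
        fix x show "x \<in> good \<C> G \<longleftrightarrow> x \<in> cls G"
          using a Su_good True Su_cls Sv_cls good_sub[of \<C> G] by (cases "x = Su \<or> x = Sv") blast+
      qed
    qed simp
    have e: "good \<C> H = cls H \<longleftrightarrow> good \<C> G = cls G" using e1 e2 by simp
    show ?thesis using c e by (simp add: kappa_plus_good)
  next
    case False
    have c: "card (good \<C> H) + 1 = card (good \<C> G)"
    proof -
      have "card (good \<C> H) = card (good \<C> G) - 1" using gH False Su_good by (simp add: card_Diff_singleton)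
      moreover have "card (good \<C> G) > 0" using finG Su_good card_gt_0_iff by blast
      ultimately show ?thesis by simp
    qed
    have e1: "good \<C> H \<noteq> cls H" using gH False cls_H X_notin by auto
    have e2: "good \<C> G \<noteq> cls G" using False Sv_cls by auto
    show ?thesis using c e1 e2 by (simp add: kappa_plus_good)
  qed
qed

end

lemma doubleton_same: "{w, x} = {w, y} \<Longrightarrow> x = y"
  by (auto simp: doubleton_eq_iff)

lemma uniq:
  assumes ex: "{w,x} \<in> E" and ey: "{w,y} \<in> E"
    and nx: "\<not> (RR (E - {{w,x}}))\<^sup>*\<^sup>* w r" and ny: "\<not> (RR (E - {{w,y}}))\<^sup>*\<^sup>* w r"
    and wr: "(RR E)\<^sup>*\<^sup>* w r"
  shows "x = y"
proof (rule ccontr)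
  assume xy: "x \<noteq> y"
  define e where "e = {w,x}"
  define f where "f = {w,y}"
  have ef: "e \<noteq> f" using xy doubleton_same unfolding e_def f_def by metis
  have xr: "(RR (E - {e}))\<^sup>*\<^sup>* x r"
    using RR_cut[OF wr, of e] nx unfolding e_def by auto
  have yr: "(RR (E - {f}))\<^sup>*\<^sup>* y r"
    using RR_cut[OF wr, of f] ny unfolding f_def by auto
  have c: "(RR (E - {f} - {e}))\<^sup>*\<^sup>* y r \<or> (\<exists>z\<in>e. (RR (E - {f} - {e}))\<^sup>*\<^sup>* z r)"
    by (rule RR_cut[OF yr])
  have s1: "E - {f} - {e} \<subseteq> E - {e}" and s2: "E - {f} - {e} \<subseteq> E - {f}" by auto
  show False
  proof (cases "(RR (E - {f} - {e}))\<^sup>*\<^sup>* y r")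
    case True
    then have "(RR (E - {e}))\<^sup>*\<^sup>* y r" using RR_mono[OF s1] by blast
    moreover have "RR (E - {e}) w y" using ey ef unfolding f_def by auto
    ultimately have "(RR (E - {e}))\<^sup>*\<^sup>* w r" by (rule converse_rtranclp_into_rtranclp[rotated])
    then show False using nx unfolding e_def by simp
  next
    case False
    then obtain z where z: "z \<in> e" "(RR (E - {f} - {e}))\<^sup>*\<^sup>* z r" using c by blast
    then have zf: "(RR (E - {f}))\<^sup>*\<^sup>* z r" using RR_mono[OF s2] by blast
    have "(RR (E - {f}))\<^sup>*\<^sup>* w r"
    proof (cases "z = w")
      case True then show ?thesis using zf by simp
    next
      case False
      then have "z = x" using z(1) unfolding e_def by auto
      moreover have "RR (E - {f}) w x" using ex ef unfolding e_def by auto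
      ultimately show ?thesis using zf by (metis converse_rtranclp_into_rtranclp)
    qed
    then show False using ny unfolding f_def by simp
  qed
qed

lemma other_end:
  assumes ar: "(RR F)\<^sup>*\<^sup>* a r" and nab: "\<not> (RR F)\<^sup>*\<^sup>* a b"
  shows "\<not> (RR F)\<^sup>*\<^sup>* b r"
proof
  assume "(RR F)\<^sup>*\<^sup>* b r"
  then have "(RR F)\<^sup>*\<^sup>* r b" by (rule RR_sym)
  then have "(RR F)\<^sup>*\<^sup>* a b" using ar by (rule rtranclp_trans[rotated])
  then show False using nab by simp
qed

definition croot :: "graph \<Rightarrow> nat \<Rightarrow> nat" where
  "croot H x = Min (cl H x)"

definition bridges :: "graph \<Rightarrow> (nat \<times> nat) set" where
  "bridges H = {(a,b). a \<in> verts H \<and> b \<in> verts H \<and> {a,b} \<in> edges H \<and>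
      \<not> reach (verts H, edges H - {{a,b}}) a b}"

lemma reach_pair: "reach (V, E) a b = (RR E)\<^sup>*\<^sup>* a b"
  unfolding reach_def edges_def by simp

lemma root_in:
  assumes "finite (verts H)" "x \<in> verts H"
  shows "croot H x \<in> cl H x"
proof -
  have "finite (cl H x)" using assms(1) unfolding cl_def by simp
  moreover have "cl H x \<noteq> {}" using cl_self[OF assms(2)] by blast
  ultimately show ?thesis unfolding croot_def by (rule Min_in)
qed

lemma root_eq:
  assumes g: "is_graph H" and x: "x \<in> verts H" and r: "reach H x y"
  shows "croot H y = croot H x"
proof -
  have "y \<in> verts H" using reach_in_V[OF g r x] .
  then have "y \<in> cl H x" using r unfolding cl_def by simp
  then have "cl H y = cl H x" by (rule cl_eq)
  then show ?thesis unfolding croot_def by simp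
qed

lemma card_roots:
  assumes g: "is_graph H"
  shows "card (croot H ` verts H) = card (cls H)"
proof -
  have fV: "finite (verts H)" using g unfolding is_graph_def by simp
  have "croot H ` verts H = Min ` cls H" unfolding cls_def croot_def by (simp add: image_image)
  moreover have "inj_on Min (cls H)"
  proof (rule inj_onI)
    fix S T assume S: "S \<in> cls H" and T: "T \<in> cls H" and m: "Min S = Min T"
    have "finite S" "finite T" using S T cls_sub fV finite_subset by blast+
    then have "Min S \<in> S" "Min T \<in> T" using S T cls_ne by (auto intro: Min_in)
    then show "S = T" using cls_disj[OF S T] m by simp
  qed
  ultimately show ?thesis by (simp add: card_image)
qed

lemma card_bridges:
  assumes g: "is_graph H"
  shows "card (bridges H) \<le> 2 * (card (verts H) - card (cls H))"
proof -
  define V where "V = verts H"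
  define E where "E = edges H"
  have fV: "finite V" using g unfolding is_graph_def V_def by simp
  define gg where "gg = (\<lambda>(a,b). if \<not> (RR (E - {{a,b}}))\<^sup>*\<^sup>* a (croot H a) then (a, True) else (b, False))"
  have key: "\<not> (RR (E - {{a,b}}))\<^sup>*\<^sup>* (fst (gg (a,b))) (croot H a)
        \<and> fst (gg (a,b)) \<in> {a,b}" if ab: "(a,b) \<in> bridges H" for a b
  proof (cases "(RR (E - {{a,b}}))\<^sup>*\<^sup>* a (croot H a)")
    case False then show ?thesis unfolding gg_def by simp
  next
    case True
    have nab: "\<not> (RR (E - {{a,b}}))\<^sup>*\<^sup>* a b" using ab unfolding bridges_def reach_pair E_def by simp
    have "\<not> (RR (E - {{a,b}}))\<^sup>*\<^sup>* b (croot H a)"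
      by (rule other_end[OF True nab])
    then show ?thesis using True unfolding gg_def by simp
  qed
  have img: "gg ` bridges H \<subseteq> (V - croot H ` V) \<times> UNIV"
  proof (rule subsetI)
    fix p assume "p \<in> gg ` bridges H"
    then obtain a b where ab: "(a,b) \<in> bridges H" and p: "p = gg (a,b)" by auto
    define w where "w = fst (gg (a,b))"
    have k: "\<not> (RR (E - {{a,b}}))\<^sup>*\<^sup>* w (croot H a)" "w \<in> {a,b}" using key[OF ab] unfolding w_def by auto
    have a: "a \<in> V" and b: "b \<in> V" and eab: "{a,b} \<in> E" using ab unfolding bridges_def V_def E_def by auto
    have wV: "w \<in> V" using k(2) a b by auto
    have rw: "croot H w = croot H a"
    proof -
      have "reach H a w" using k(2) eab unfolding reach_def E_def by auto
      then show ?thesis using root_eq[OF g] a unfolding V_def by blast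
    qed
    have "w \<notin> croot H ` V"
    proof
      assume "w \<in> croot H ` V"
      then obtain x where x: "x \<in> V" "w = croot H x" by auto
      then have "w \<in> cl H x" using root_in fV unfolding V_def by metis
      then have "cl H w = cl H x" by (rule cl_eq)
      then have "croot H w = w" using x unfolding croot_def by simp
      then show False using k(1) rw by simp
    qed
    then have "fst (gg (a, b)) \<in> V - croot H ` V" using wV unfolding w_def by simp
    then show "p \<in> (V - croot H ` V) \<times> UNIV" using p by (simp add: mem_Times_iff)
  qed
  have inj: "inj_on gg (bridges H)"
  proof (rule inj_onI, clarify)
    fix a b a' b'
    assume ab: "(a,b) \<in> bridges H" and ab': "(a',b') \<in> bridges H" and eq: "gg (a,b) = gg (a',b')"
    have a: "a \<in> V" and b: "b \<in> V" and eab: "{a,b} \<in> E" and nab: "\<not> (RR (E - {{a,b}}))\<^sup>*\<^sup>* a b"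
      using ab unfolding bridges_def V_def E_def reach_pair by auto
    have a': "a' \<in> V" and b': "b' \<in> V" and eab': "{a',b'} \<in> E" and nab': "\<not> (RR (E - {{a',b'}}))\<^sup>*\<^sup>* a' b'"
      using ab' unfolding bridges_def V_def E_def reach_pair by auto
    have rab: "reach H a b" and rab': "reach H a' b'" using eab eab' unfolding reach_def E_def by auto
    have ra: "(RR E)\<^sup>*\<^sup>* a (croot H a)" using root_in[OF fV[unfolded V_def] a[unfolded V_def]]
      unfolding cl_def reach_def E_def by simp
    have ra': "(RR E)\<^sup>*\<^sup>* a' (croot H a')" using root_in[OF fV[unfolded V_def] a'[unfolded V_def]]
      unfolding cl_def reach_def E_def by simp
    have rb: "croot H b = croot H a" using root_eq[OF g _ rab] a unfolding V_def by simp
    have rb': "croot H b' = croot H a'" using root_eq[OF g _ rab'] a' unfolding V_def by simp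
    show "a = a' \<and> b = b'"
    proof (cases "(RR (E - {{a,b}}))\<^sup>*\<^sup>* a (croot H a)")
      case False
      then have g1: "gg (a,b) = (a, True)" unfolding gg_def by simp
      then have g2: "gg (a',b') = (a, True)" using eq by simp
      then have aa: "a' = a" and F': "\<not> (RR (E - {{a',b'}}))\<^sup>*\<^sup>* a' (croot H a')"
        unfolding gg_def by (auto split: if_splits)
      have "b = b'" using uniq[OF eab eab'[unfolded aa] False F'[unfolded aa] ra] .
      then show ?thesis using aa by simp
    next
      case True
      then have g1: "gg (a,b) = (b, False)" unfolding gg_def by simp
      then have g2: "gg (a',b') = (b, False)" using eq by simp
      then have bb: "b' = b" and T': "(RR (E - {{a',b'}}))\<^sup>*\<^sup>* a' (croot H a')"
        unfolding gg_def by (auto split: if_splits)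
      have n1: "\<not> (RR (E - {{b,a}}))\<^sup>*\<^sup>* b (croot H b)"
        using other_end[OF True nab] rb by (simp add: insert_commute)
      have n2: "\<not> (RR (E - {{b,a'}}))\<^sup>*\<^sup>* b (croot H b)"
        using other_end[OF T' nab'] rb' bb rb by (simp add: insert_commute)
      have "RR E b a" using eab by (simp add: insert_commute)
      then have rbE: "(RR E)\<^sup>*\<^sup>* b (croot H b)" using ra rb
        by (simp add: converse_rtranclp_into_rtranclp)
      have "a = a'" using uniq[of b a E a' "croot H b"] eab eab' bb n1 n2 rbE
        by (simp add: insert_commute)
      then show ?thesis using bb by simp
    qed
  qed
  have "card (bridges H) = card (gg ` bridges H)" using inj by (simp add: card_image)
  also have "\<dots> \<le> card ((V - croot H ` V) \<times> (UNIV :: bool set))"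
    using img fV by (intro card_mono) auto
  also have "\<dots> = 2 * (card V - card (croot H ` V))"
  proof -
    have rV: "croot H ` V \<subseteq> V"
    proof
      fix y assume "y \<in> croot H ` V"
      then obtain x where x: "x \<in> V" "y = croot H x" by auto
      then show "y \<in> V" using root_in[of H x] fV unfolding V_def cl_def by auto
    qed
    have "card (V - croot H ` V) = card V - card (croot H ` V)"
      using rV fV by (intro card_Diff_subset) (auto intro: finite_subset[OF rV])
    then show ?thesis by (simp add: card_cartesian_product)
  qed
  finally show ?thesis using card_roots[OF g] unfolding V_def by simp
qed

lemma sum_sq_le: "(\<Sum>x\<in>L. (q x::nat)^2) \<le> (\<Sum>x\<in>L. q x)^2"
proof (induction L rule: infinite_finite_induct)
  case (insert x F)
  then show ?case by (simp add: power2_sum)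
qed auto

lemma numeric:
  fixes p :: "'a \<Rightarrow> nat"
  assumes fin: "finite L" and p1: "\<forall>l\<in>L. p l \<ge> 1" and kL: "card L \<ge> k + 1" and k1: "k \<ge> 1"
  shows "2 * k * (sum p L - k) + (\<Sum>l\<in>L. p l * p l) \<le> sum p L * sum p L"
proof -
  define q where "q l = p l - 1" for l
  define T where "T = sum q L"
  define j where "j = card L"
  have pq: "\<forall>l\<in>L. p l = q l + 1" using p1 unfolding q_def by auto
  have "sum p L = (\<Sum>l\<in>L. q l + 1)" using pq by (intro sum.cong) auto
  also have "\<dots> = T + j" unfolding sum.distrib T_def j_def by simp
  finally have sp: "sum p L = T + j" .
  have spp: "(\<Sum>l\<in>L. p l * p l) = (\<Sum>l\<in>L. (q l)^2) + 2 * T + j"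
  proof -
    have "(\<Sum>l\<in>L. p l * p l) = (\<Sum>l\<in>L. (q l)^2 + 2 * q l + 1)"
      using pq by (intro sum.cong) (auto simp: power2_eq_square algebra_simps)
    also have "\<dots> = (\<Sum>l\<in>L. (q l)^2) + 2 * T + j"
      unfolding T_def j_def sum.distrib sum_distrib_left[symmetric] by simp
    finally show ?thesis .
  qed
  have sq: "(\<Sum>l\<in>L. (q l)^2) \<le> T^2" unfolding T_def by (rule sum_sq_le)
  obtain m where m: "k = m + 1" using k1 by (metis add.commute le_Suc_ex Suc_eq_plus1_left)
  obtain s where s: "j = m + 2 + s" using kL m unfolding j_def by (metis add_2_eq_Suc' add_Suc le_Suc_ex add.assoc one_add_one)
  have id: "(T + j) * (T + j) = 2 * k * (T + j - k) + (T^2 + 2 * T + j) + (m * m + m + s * s + s + 2 * s * T)"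
    unfolding s m by (simp add: algebra_simps power2_eq_square)
  show ?thesis unfolding sp spp using sq id by linarith
qed

definition ff :: "graph set \<Rightarrow> graph \<Rightarrow> nat \<Rightarrow> nat set" where
  "ff \<C> G x = (if cl G x \<in> good \<C> G then cl G x else {})"

definition XX :: "graph set \<Rightarrow> graph \<Rightarrow> (nat \<times> nat) set" where
  "XX \<C> G = {(a,b). a \<in> verts G \<and> b \<in> verts G \<and> ff \<C> G a \<noteq> ff \<C> G b}"

lemma add_comm: "add_edge G a b = add_edge G b a"
  by (simp add: add_edge_def insert_commute)

lemma graph_collapse: "(verts G, edges G) = G"
  by (simp add: verts_def edges_def)

locale mainctx =
  fixes \<A> \<C> :: "graph set" and n :: nat
  assumes Agr: "\<forall>G\<in>\<A>. is_graph G" and bs: "bridge_stable \<C>"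
    and ba: "\<forall>H\<in>\<C>. bridge_addable \<A> H"
begin

definition Sj :: "nat \<Rightarrow> graph set" where
  "Sj j = {G \<in> slice \<A> n. kappa_plus G \<C> = j}"

lemma slice_graph: "G \<in> slice \<A> n \<Longrightarrow> is_graph G \<and> G \<in> \<A> \<and> verts G = {1..n}"
  using Agr unfolding slice_def by auto

lemma add_in_A:
  assumes GA: "G \<in> \<A>" and g: "is_graph G" and a: "a \<in> verts G"
    and good: "cl G a \<in> good \<C> G" and b: "b \<in> verts G - cl G a" and ne: "{a,b} \<notin> edges G"
  shows "add_edge G a b \<in> \<A>"
proof -
  define K where "K = induced G (cl G a)"
  have Kc: "K \<in> components G" unfolding K_def components_cls using good good_sub by blast
  have KC: "K \<in> \<C>" using good unfolding good_def K_def by simp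
  have iso: "graph_iso K K" unfolding graph_iso_def
    by (intro exI[of _ id]) (simp add: bij_betw_id)
  have "bridge_addable \<A> K" using ba KC by blast
  then have "\<forall>u\<in>verts K. \<forall>v\<in>verts G - verts K. {u, v} \<notin> edges G \<longrightarrow> add_edge G u v \<in> \<A>"
    unfolding bridge_addable_def using GA Kc iso by blast
  moreover have "a \<in> verts K" using cl_self[OF a] unfolding K_def by simp
  moreover have "b \<in> verts G - verts K" using b unfolding K_def by simp
  ultimately show ?thesis using ne by blast
qed

lemma X_add:
  assumes G: "G \<in> slice \<A> n" and ab: "(a,b) \<in> XX \<C> G"
  shows "add_edge G a b \<in> slice \<A> n \<and> kappa_plus (add_edge G a b) \<C> + 1 = kappa_plus G \<C>
         \<and> (a,b) \<in> bridges (add_edge G a b) \<and> {a,b} \<notin> edges G"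
proof -
  have g: "is_graph G" and GA: "G \<in> \<A>" and V: "verts G = {1..n}" using slice_graph[OF G] by auto
  have a: "a \<in> verts G" and b: "b \<in> verts G" and fab: "ff \<C> G a \<noteq> ff \<C> G b"
    using ab unfolding XX_def by auto
  have ncl: "cl G a \<noteq> cl G b"
  proof
    assume "cl G a = cl G b"
    then have "ff \<C> G a = ff \<C> G b" unfolding ff_def by simp
    then show False using fab by simp
  qed
  have nr: "\<not> reach G a b" using ncl cl_eq_iff[OF a, of b] by auto
  have nr': "\<not> reach G b a" using nr reach_sym by blast
  have ne: "{a,b} \<notin> edges G"
  proof
    assume "{a,b} \<in> edges G"
    then have "reach G a b" unfolding reach_def by (simp add: r_into_rtranclp)
    then show False using nr by simp
  qed
  have bna: "b \<notin> cl G a" using ncl cl_eq by metis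
  have anb: "a \<notin> cl G b" using ncl cl_eq by metis
  have br: "(a,b) \<in> bridges (add_edge G a b)"
  proof -
    have "insert {a,b} (edges G) - {{a,b}} = edges G" using ne by auto
    then show ?thesis unfolding bridges_def using a b nr by (simp add: graph_collapse)
  qed
  have main: "add_edge G a b \<in> \<A> \<and> kappa_plus (add_edge G a b) \<C> + 1 = kappa_plus G \<C>"
  proof (cases "cl G a \<in> good \<C> G")
    case True
    interpret addctx G a b using g a b nr by unfold_locales
    show ?thesis using kp_H[OF bs True] add_in_A[OF GA g a True _ ne] b bna by blast
  next
    case False
    then have "ff \<C> G a = {}" unfolding ff_def by simp
    then have gb: "cl G b \<in> good \<C> G" using fab unfolding ff_def by (auto split: if_splits)
    interpret addctx G b a using g a b nr' by unfold_locales
    have ne': "{b,a} \<notin> edges G" using ne by (simp add: insert_commute)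
    show ?thesis using kp_H[OF bs gb] add_in_A[OF GA g b gb _ ne'] a anb add_comm[of G a b] by simp
  qed
  have "add_edge G a b \<in> slice \<A> n" using main V unfolding slice_def by simp
  then show ?thesis using main br ne by simp
qed

end

context mainctx
begin

lemma kp_le_n: "G \<in> slice \<A> n \<Longrightarrow> kappa_plus G \<C> \<le> n"
proof -
  assume G: "G \<in> slice \<A> n"
  then have g: "is_graph G" and V: "verts G = {1..n}" using slice_graph by auto
  have "kappa_plus G \<C> \<le> card (cls G)" using kappa_plus_le_cls V by simp
  also have "\<dots> \<le> card (verts G)" by (rule card_cls) (simp add: V)
  finally show ?thesis using V by simp
qed

lemma card_X:
  assumes G: "G \<in> Sj (k+1)" and k1: "k \<ge> 1"
  shows "2 * k * (n - k) \<le> card (XX \<C> G)"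
proof -
  have Gs: "G \<in> slice \<A> n" and kp: "kappa_plus G \<C> = k + 1" using G unfolding Sj_def by auto
  have g: "is_graph G" and V: "verts G = {1..n}" using slice_graph[OF Gs] by auto
  define f where "f = ff \<C> G"
  define W where "W = verts G"
  have fW: "finite W" and cW: "card W = n" unfolding W_def V by auto
  define p where "p l = card {b \<in> W. f b = l}" for l
  have fcls: "finite (cls G)" using finite_cls fW unfolding W_def by blast
  have gsub: "good \<C> G \<subseteq> f ` W"
  proof
    fix S assume S: "S \<in> good \<C> G"
    then obtain w where w: "w \<in> W" "S = cl G w" using good_sub unfolding cls_def W_def by blast
    then have "f w = S" using S unfolding f_def ff_def by simp
    then show "S \<in> f ` W" using w by blast
  qed
  have cardL: "card (f ` W) \<ge> k + 1"
  proof (cases "good \<C> G = cls G")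
    case True
    then have "card (good \<C> G) = k + 1" using kp kappa_plus_good[of G \<C>] by simp
    then show ?thesis using card_mono[OF _ gsub] fW by simp
  next
    case False
    then obtain S where S: "S \<in> cls G" "S \<notin> good \<C> G" using good_sub by blast
    then obtain w where w: "w \<in> W" "S = cl G w" unfolding cls_def W_def by blast
    have "f w = {}" using w S unfolding f_def ff_def by simp
    then have sub: "insert {} (good \<C> G) \<subseteq> f ` W" using gsub w by blast
    have "{} \<notin> good \<C> G" using cls_ne good_sub by blast
    moreover have "finite (good \<C> G)" using fcls good_sub finite_subset by blast
    ultimately have "card (insert {} (good \<C> G)) = card (good \<C> G) + 1" by simp
    moreover have "card (good \<C> G) + 1 = k + 1" using kp False kappa_plus_good[of G \<C>] by simp
    ultimately show ?thesis using card_mono[OF _ sub] fW by simp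
  qed
  define Same where "Same = (SIGMA a:W. {b \<in> W. f b = f a})"
  have XS: "XX \<C> G = W \<times> W - Same" unfolding XX_def Same_def W_def f_def by auto
  have SW: "Same \<subseteq> W \<times> W" unfolding Same_def by auto
  have cSame: "card Same = (\<Sum>l\<in>f ` W. p l * p l)"
  proof -
    have "card Same = (\<Sum>a\<in>W. p (f a))" unfolding Same_def p_def using fW by simp
    also have "\<dots> = (\<Sum>l\<in>f ` W. (\<Sum>a\<in>{x \<in> W. f x = l}. p (f a)))"
      by (rule sum.image_gen[OF fW])
    also have "\<dots> = (\<Sum>l\<in>f ` W. p l * p l)"
    proof (rule sum.cong[OF refl])
      fix l assume "l \<in> f ` W"
      have "(\<Sum>a\<in>{x \<in> W. f x = l}. p (f a)) = (\<Sum>a\<in>{x \<in> W. f x = l}. p l)" by simp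
      also have "\<dots> = p l * p l" unfolding p_def by simp
      finally show "(\<Sum>a\<in>{x \<in> W. f x = l}. p (f a)) = p l * p l" .
    qed
    finally show ?thesis .
  qed
  have sp: "sum p (f ` W) = n"
  proof -
    have "card W = (\<Sum>a\<in>W. (1::nat))" by simp
    also have "\<dots> = (\<Sum>l\<in>f ` W. (\<Sum>a\<in>{x \<in> W. f x = l}. (1::nat)))"
      by (rule sum.image_gen[OF fW])
    also have "\<dots> = sum p (f ` W)" unfolding p_def by simp
    finally show ?thesis using cW by simp
  qed
  have p1: "\<forall>l\<in>f ` W. p l \<ge> 1"
  proof
    fix l assume "l \<in> f ` W"
    then obtain w where "w \<in> W" "f w = l" by blast
    then have "{b \<in> W. f b = l} \<noteq> {}" by blast
    moreover have "finite {b \<in> W. f b = l}" using fW by simp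
    ultimately show "p l \<ge> 1" unfolding p_def by (simp add: Suc_leI card_gt_0_iff)
  qed
  have num: "2 * k * (n - k) + card Same \<le> n * n"
    using numeric[OF _ p1 cardL k1] fW sp cSame by simp
  have "card (XX \<C> G) = card (W \<times> W) - card Same"
    unfolding XS using SW fW by (intro card_Diff_subset) (auto intro: finite_subset[OF SW])
  then have "card (XX \<C> G) = n * n - card Same" using cW by (simp add: card_cartesian_product)
  then show ?thesis using num by simp
qed

lemma finite_slice: "finite (slice \<A> n)"
proof -
  have "slice \<A> n \<subseteq> {{1..n}} \<times> Pow (Pow {1..n})"
  proof
    fix G assume G: "G \<in> slice \<A> n"
    then have g: "is_graph G" and V: "verts G = {1..n}" using slice_graph by auto
    have "edges G \<subseteq> Pow {1..n}"
    proof
      fix e assume e: "e \<in> edges G"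
      have "\<forall>e\<in>edges G. \<exists>u v. u \<noteq> v \<and> u \<in> verts G \<and> v \<in> verts G \<and> e = {u, v}"
        using g unfolding is_graph_def by simp
      from bspec[OF this e] obtain u v where "u \<in> verts G" "v \<in> verts G" "e = {u,v}" by blast
      then show "e \<in> Pow {1..n}" using V by auto
    qed
    then have "(verts G, edges G) \<in> {{1..n}} \<times> Pow (Pow {1..n})" using V by simp
    then show "G \<in> {{1..n}} \<times> Pow (Pow {1..n})" by (simp add: graph_collapse)
  qed
  then show ?thesis by (rule finite_subset) simp
qed

lemma ratio:
  assumes k1: "k \<ge> 1"
  shows "k * card (Sj (k+1)) \<le> card (Sj k)"
proof (cases "Sj (k+1) = {}")
  case True then show ?thesis by simp
next
  case False
  then obtain G0 where G0: "G0 \<in> Sj (k+1)" by blast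
  then have "k + 1 \<le> n" using kp_le_n[of G0] unfolding Sj_def by auto
  then have nk: "n - k > 0" by simp
  have finS: "finite (Sj j)" for j using finite_slice unfolding Sj_def by simp
  define P where "P = Sigma (Sj (k+1)) (XX \<C>)"
  define phi where "phi = (\<lambda>(G, ab). (add_edge G (fst ab) (snd ab), ab))"
  have finX: "finite (XX \<C> G)" if "G \<in> slice \<A> n" for G
  proof -
    have "XX \<C> G \<subseteq> verts G \<times> verts G" unfolding XX_def by auto
    moreover have "finite (verts G)" using slice_graph[OF that] by simp
    ultimately show ?thesis using finite_subset by blast
  qed
  have finB: "finite (bridges H)" if "H \<in> slice \<A> n" for H
  proof -
    have "bridges H \<subseteq> verts H \<times> verts H" unfolding bridges_def by auto
    moreover have "finite (verts H)" using slice_graph[OF that] by simp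
    ultimately show ?thesis using finite_subset by blast
  qed
  have c1: "card (Sj (k+1)) * (2 * k * (n - k)) \<le> card P"
  proof -
    have "card P = (\<Sum>G\<in>Sj (k+1). card (XX \<C> G))"
      unfolding P_def using finS finX unfolding Sj_def by (simp add: Sj_def)
    moreover have "card (Sj (k+1)) * (2 * k * (n - k)) \<le> (\<Sum>G\<in>Sj (k+1). card (XX \<C> G))"
      using sum_bounded_below[of "Sj (k+1)" "2 * k * (n - k)" "\<lambda>G. card (XX \<C> G)"] card_X k1 by simp
    ultimately show ?thesis by simp
  qed
  have inj: "inj_on phi P"
  proof (rule inj_onI)
    fix x y assume x: "x \<in> P" and y: "y \<in> P" and e: "phi x = phi y"
    obtain G a b where xx: "x = (G, (a,b))" by (metis prod.collapse)
    obtain G' a' b' where yy: "y = (G', (a',b'))" by (metis prod.collapse)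
    have Gs: "G \<in> slice \<A> n" and abX: "(a,b) \<in> XX \<C> G" using x xx unfolding P_def Sj_def by auto
    have G's: "G' \<in> slice \<A> n" and abX': "(a',b') \<in> XX \<C> G'" using y yy unfolding P_def Sj_def by auto
    have aa: "a' = a" "b' = b" and ee: "add_edge G a b = add_edge G' a b"
      using e unfolding xx yy phi_def by auto
    have n1: "{a,b} \<notin> edges G" using X_add[OF Gs abX] by simp
    have n2: "{a,b} \<notin> edges G'" using X_add[OF G's abX'] aa by simp
    have "G = (verts (add_edge G a b), edges (add_edge G a b) - {{a,b}})"
      using n1 graph_collapse[of G] by auto
    also have "\<dots> = (verts (add_edge G' a b), edges (add_edge G' a b) - {{a,b}})" using ee by simp
    also have "\<dots> = G'" using n2 graph_collapse[of G'] by auto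
    finally show "x = y" using xx yy aa by simp
  qed
  have img: "phi ` P \<subseteq> Sigma (Sj k) bridges"
  proof
    fix z assume "z \<in> phi ` P"
    then obtain G a b where G: "G \<in> Sj (k+1)" and ab: "(a,b) \<in> XX \<C> G" and z: "z = phi (G,(a,b))"
      unfolding P_def by auto
    have Gs: "G \<in> slice \<A> n" using G unfolding Sj_def by simp
    note X = X_add[OF Gs ab]
    have "add_edge G a b \<in> Sj k" using X G unfolding Sj_def by simp
    then show "z \<in> Sigma (Sj k) bridges" using X z unfolding phi_def by simp
  qed
  have c2: "card (Sigma (Sj k) bridges) \<le> card (Sj k) * (2 * (n - k))"
  proof -
    have "card (Sigma (Sj k) bridges) = (\<Sum>H\<in>Sj k. card (bridges H))"
      using finS finB unfolding Sj_def by (simp add: Sj_def)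
    moreover have "(\<Sum>H\<in>Sj k. card (bridges H)) \<le> card (Sj k) * (2 * (n - k))"
    proof -
      have "card (bridges H) \<le> 2 * (n - k)" if H: "H \<in> Sj k" for H
      proof -
        have Hs: "H \<in> slice \<A> n" and kH: "kappa_plus H \<C> = k" using H unfolding Sj_def by auto
        have g: "is_graph H" and V: "verts H = {1..n}" using slice_graph[OF Hs] by auto
        have "k \<le> card (cls H)" using kappa_plus_le_cls[of H \<C>] kH V by simp
        then show ?thesis using card_bridges[OF g] V by simp
      qed
      then show ?thesis using sum_bounded_above[of "Sj k" "\<lambda>H. card (bridges H)" "2 * (n - k)"] by simp
    qed
    ultimately show ?thesis by simp
  qed
  have fin2: "finite (Sigma (Sj k) bridges)"
    using finS by (rule finite_SigmaI) (auto simp: Sj_def intro: finB)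
  have "card P = card (phi ` P)" using inj by (simp add: card_image)
  also have "\<dots> \<le> card (Sigma (Sj k) bridges)" using img fin2 by (rule card_mono[rotated])
  finally have "card (Sj (k+1)) * (2 * k * (n - k)) \<le> card (Sj k) * (2 * (n - k))" using c1 c2 by linarith
  then have "(k * card (Sj (k+1))) * (2 * (n - k)) \<le> card (Sj k) * (2 * (n - k))"
    by (simp add: algebra_simps)
  then show ?thesis using nk by simp
qed

lemma Sj0: "n \<ge> 1 \<Longrightarrow> Sj 0 = {}"
proof -
  assume n: "n \<ge> 1"
  have "kappa_plus G \<C> \<noteq> 0" if G: "G \<in> slice \<A> n" for G
  proof -
    have V: "verts G = {1..n}" using slice_graph[OF G] by simp
    then have "cls G \<noteq> {}" using n unfolding cls_def by auto
    moreover have "finite (cls G)" using finite_cls V by simp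
    ultimately show ?thesis unfolding kappa_plus_good by auto
  qed
  then show ?thesis unfolding Sj_def by auto
qed

end

lemma tail_bound:
  fixes \<beta> :: "nat \<Rightarrow> real" and Q :: real
  assumes nn: "\<And>k. \<beta> k \<ge> 0"
    and dec: "\<And>k. \<beta> (Suc k) * fact (Suc k) \<le> \<beta> k * fact k"
    and mn: "m \<le> n"
    and Q1: "(\<Sum>k\<in>{m..<n}. exp (-1) / fact k) \<le> Q"
    and Q2: "(\<Sum>k<m. exp (-1) / fact k) = 1 - Q"
  shows "(\<Sum>k\<in>{m..<n}. \<beta> k) \<le> (\<Sum>k<n. \<beta> k) * Q"
proof -
  define \<gamma> where "\<gamma> k = \<beta> k * fact k" for k
  have "decseq \<gamma>" unfolding \<gamma>_def by (rule decseq_SucI) (use dec in auto)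
  then have gle: "i \<le> j \<Longrightarrow> \<gamma> j \<le> \<gamma> i" for i j by (simp add: decseq_def)
  define R where "R = \<gamma> m * exp 1"
  have R0: "R \<ge> 0" unfolding R_def \<gamma>_def using nn by simp
  have bk: "\<beta> k = \<gamma> k / fact k" for k unfolding \<gamma>_def by simp
  have Rq: "R * (exp (-1) / fact k) = \<gamma> m / fact k" for k
    unfolding R_def by (simp add: exp_minus field_simps)
  have up: "\<beta> k \<le> R * (exp (-1) / fact k)" if "m \<le> k" for k
    unfolding Rq bk using gle[OF that] by (simp add: divide_right_mono)
  have lo: "R * (exp (-1) / fact k) \<le> \<beta> k" if "k \<le> m" for k
    unfolding Rq bk using gle[OF that] by (simp add: divide_right_mono)
  have Qnn: "0 \<le> Q" using Q1 order_trans[OF sum_nonneg] by (meson divide_nonneg_nonneg exp_ge_zero fact_ge_zero)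
  have Qle: "0 \<le> 1 - Q" unfolding Q2[symmetric] by (intro sum_nonneg) simp
  define tail where "tail = (\<Sum>k\<in>{m..<n}. \<beta> k)"
  define head where "head = (\<Sum>k<m. \<beta> k)"
  define N where "N = (\<Sum>k<n. \<beta> k)"
  have split: "N = head + tail"
    unfolding N_def head_def tail_def lessThan_atLeast0
    using sum.atLeastLessThan_concat[of 0 m n \<beta>] mn by simp
  have t1: "tail \<le> R * Q"
  proof -
    have "tail \<le> (\<Sum>k\<in>{m..<n}. R * (exp (-1) / fact k))"
      unfolding tail_def by (intro sum_mono up) simp
    also have "\<dots> = R * (\<Sum>k\<in>{m..<n}. exp (-1) / fact k)" by (simp add: sum_distrib_left)
    also have "\<dots> \<le> R * Q" by (rule mult_left_mono[OF Q1 R0])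
    finally show ?thesis .
  qed
  have h1: "R * (1 - Q) \<le> head"
  proof -
    have "R * (1 - Q) = (\<Sum>k<m. R * (exp (-1) / fact k))" unfolding Q2[symmetric] by (simp add: sum_distrib_left)
    also have "\<dots> \<le> head" unfolding head_def by (intro sum_mono lo) simp
    finally show ?thesis .
  qed
  show ?thesis
  proof (cases "R \<le> N")
    case True
    then have "R * Q \<le> N * Q" using Qnn by (rule mult_right_mono)
    then show ?thesis using t1 unfolding tail_def[symmetric] N_def[symmetric] by linarith
  next
    case False
    then have "N * (1 - Q) \<le> R * (1 - Q)" using Qle by (intro mult_right_mono) auto
    then have "tail \<le> N - N * (1 - Q)" using h1 split by linarith
    then show ?thesis unfolding tail_def[symmetric] N_def[symmetric] by (simp add: algebra_simps)
  qed
qed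

context mainctx
begin

lemma main_m:
  assumes n1: "n \<ge> 1"
  shows "real (card {G \<in> slice \<A> n. m < kappa_plus G \<C>})
         \<le> real (card (slice \<A> n)) * measure_pmf.prob (poisson_pmf 1) {k. m \<le> k}"
proof -
  define Q where "Q = measure_pmf.prob (poisson_pmf 1) {k. m \<le> k}"
  have Q0: "Q \<ge> 0" unfolding Q_def by simp
  have finS: "finite (Sj j)" for j using finite_slice unfolding Sj_def by simp
  have finS': "finite {G \<in> slice \<A> n. kappa_plus G \<C> = j}" for j using finS[of j] unfolding Sj_def .
  show ?thesis
  proof (cases "n \<le> m")
    case True
    then have e: "{G \<in> slice \<A> n. m < kappa_plus G \<C>} = {}" using kp_le_n by force
    show ?thesis unfolding e Q_def[symmetric] using Q0 by simp
  next
    case False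
    then have mn: "m \<le> n" by simp
    define \<beta> where "\<beta> k = real (card (Sj (k+1)))" for k
    have dec: "\<beta> (Suc k) * fact (Suc k) \<le> \<beta> k * fact k" for k
    proof -
      have "(k+1) * card (Sj (k+1+1)) \<le> card (Sj (k+1))" using ratio[of "k+1"] by simp
      then have "real (k+1) * \<beta> (Suc k) \<le> \<beta> k" unfolding \<beta>_def
        by (metis Suc_eq_plus1 of_nat_le_iff of_nat_mult)
      then have "real (k+1) * \<beta> (Suc k) * fact k \<le> \<beta> k * fact k"
        by (rule mult_right_mono) simp
      moreover have "fact (Suc k) = real (k+1) * (fact k :: real)" by simp
      ultimately show ?thesis by (simp add: algebra_simps)
    qed
    have pm: "pmf (poisson_pmf 1) k = exp (-1) / fact k" for k
      using pmf_poisson[of 1 k] by simp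
    have Q1: "(\<Sum>k\<in>{m..<n}. exp (-1) / fact k) \<le> Q"
    proof -
      have "(\<Sum>k\<in>{m..<n}. exp (-1) / fact k) = measure_pmf.prob (poisson_pmf 1) {m..<n}"
        by (simp add: measure_measure_pmf_finite pm)
      also have "\<dots> \<le> Q" unfolding Q_def by (intro measure_pmf.finite_measure_mono) auto
      finally show ?thesis .
    qed
    have Q2: "(\<Sum>k<m. exp (-1) / fact k) = 1 - Q"
    proof -
      have s1: "(\<Sum>k<m. exp (-1) / fact k) = measure_pmf.prob (poisson_pmf 1) {..<m}"
        by (simp add: measure_measure_pmf_finite pm)
      have se: "{..<m} = UNIV - {k. m \<le> k}" by auto
      have "measure_pmf.prob (poisson_pmf 1) (UNIV - {k. m \<le> k}) = 1 - Q"
        unfolding Q_def using measure_pmf.prob_compl[of "{k. m \<le> k}" "poisson_pmf 1"] by simp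
      then show ?thesis using s1 se by simp
    qed
    have tb: "(\<Sum>k\<in>{m..<n}. \<beta> k) \<le> (\<Sum>k<n. \<beta> k) * Q"
      by (rule tail_bound[OF _ dec mn Q1 Q2]) (simp add: \<beta>_def)
    have disj: "\<forall>i\<in>I. \<forall>j\<in>I. i \<noteq> j \<longrightarrow> Sj (i+1) \<inter> Sj (j+1) = {}" for I
      unfolding Sj_def by auto
    have c1: "{G \<in> slice \<A> n. m < kappa_plus G \<C>} = (\<Union>k\<in>{m..<n}. Sj (k+1))"
    proof (rule set_eqI)
      fix G show "G \<in> {G \<in> slice \<A> n. m < kappa_plus G \<C>} \<longleftrightarrow> G \<in> (\<Union>k\<in>{m..<n}. Sj (k+1))"
      proof
        assume G: "G \<in> {G \<in> slice \<A> n. m < kappa_plus G \<C>}"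
        then have "kappa_plus G \<C> \<le> n" using kp_le_n by blast
        then have "kappa_plus G \<C> - 1 \<in> {m..<n}" "G \<in> Sj (kappa_plus G \<C> - 1 + 1)"
          using G unfolding Sj_def by auto
        then show "G \<in> (\<Union>k\<in>{m..<n}. Sj (k+1))" by blast
      qed (auto simp: Sj_def)
    qed
    have c2: "slice \<A> n = (\<Union>k\<in>{..<n}. Sj (k+1))"
    proof (rule set_eqI)
      fix G show "G \<in> slice \<A> n \<longleftrightarrow> G \<in> (\<Union>k\<in>{..<n}. Sj (k+1))"
      proof
        assume G: "G \<in> slice \<A> n"
        then have "kappa_plus G \<C> \<le> n" using kp_le_n by blast
        moreover have "kappa_plus G \<C> \<noteq> 0"
        proof
          assume "kappa_plus G \<C> = 0"
          then have "G \<in> Sj 0" using G unfolding Sj_def by simp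
          then show False using Sj0[OF n1] by simp
        qed
        ultimately have "kappa_plus G \<C> - 1 \<in> {..<n}" "G \<in> Sj (kappa_plus G \<C> - 1 + 1)"
          using G unfolding Sj_def by auto
        then show "G \<in> (\<Union>k\<in>{..<n}. Sj (k+1))" by blast
      qed (auto simp: Sj_def)
    qed
    have e1: "card {G \<in> slice \<A> n. m < kappa_plus G \<C>} = (\<Sum>k\<in>{m..<n}. card (Sj (k+1)))"
      unfolding c1 by (rule card_UN_disjoint) (auto simp: finS finS' Sj_def)
    have e2: "card (slice \<A> n) = (\<Sum>k<n. card (Sj (k+1)))"
      unfolding c2 by (subst card_UN_disjoint) (auto simp: finS finS' Sj_def)
    show ?thesis using tb unfolding e1 e2 \<beta>_def Q_def by simp
  qed
qed

end

theorem lemma5p2: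
  fixes \<A> \<C> :: "graph set" and n :: nat
  assumes "\<forall>G\<in>\<A>. is_graph G"
    and "\<forall>H\<in>\<C>. is_graph H \<and> connected_graph H"
    and "iso_closed \<C>"
    and "bridge_stable \<C>"
    and "\<forall>H\<in>\<C>. bridge_addable \<A> H"
    and "slice \<A> n \<noteq> {}"
  shows "\<forall>t::real.
     measure_pmf.prob (pmf_of_set (slice \<A> n)) {G. real (kappa_plus G \<C>) > t}
       \<le> measure_pmf.prob (poisson_pmf 1) {k. 1 + real k > t}"
proof
  fix t :: real
  interpret mainctx \<A> \<C> n using assms by unfold_locales auto
  have ne: "slice \<A> n \<noteq> {}" and fin: "finite (slice \<A> n)" using assms(6) finite_slice by auto
  show "measure_pmf.prob (pmf_of_set (slice \<A> n)) {G. real (kappa_plus G \<C>) > t}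
       \<le> measure_pmf.prob (poisson_pmf 1) {k. 1 + real k > t}"
  proof (cases "t < 0")
    case True
    then have "{k. 1 + real k > t} = UNIV" by auto
    then have "measure_pmf.prob (poisson_pmf 1) {k. 1 + real k > t} = 1" by simp
    then show ?thesis using measure_pmf.prob_le_1 by simp
  next
    case False
    define m where "m = nat \<lfloor>t\<rfloor>"
    have fl: "t < real x \<longleftrightarrow> m < x" for x :: nat
    proof -
      have "t < real x \<longleftrightarrow> \<lfloor>t\<rfloor> < int x" using floor_less_iff[of t "int x"] by simp
      also have "\<dots> \<longleftrightarrow> m < x"
      proof -
        have im: "int m = \<lfloor>t\<rfloor>" unfolding m_def using False by simp
        show ?thesis by (simp add: im[symmetric])
      qed
      finally show ?thesis .
    qed
    have r1: "{k. 1 + real k > t} = {k. m \<le> k}"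
    proof (rule set_eqI)
      fix k
      have "t < 1 + real k \<longleftrightarrow> t < real (Suc k)" by simp
      also have "\<dots> \<longleftrightarrow> m < Suc k" by (rule fl)
      finally show "k \<in> {k. 1 + real k > t} \<longleftrightarrow> k \<in> {k. m \<le> k}" by (simp add: less_Suc_eq_le)
    qed
    have r2: "slice \<A> n \<inter> {G. real (kappa_plus G \<C>) > t} = {G \<in> slice \<A> n. m < kappa_plus G \<C>}"
      using fl[of "kappa_plus _ \<C>"] by blast
    have lhs: "measure_pmf.prob (pmf_of_set (slice \<A> n)) {G. real (kappa_plus G \<C>) > t}
        = real (card {G \<in> slice \<A> n. m < kappa_plus G \<C>}) / real (card (slice \<A> n))"
      using measure_pmf_of_set[OF ne fin] r2 by simp
    have cpos: "real (card (slice \<A> n)) > 0" using ne fin by (simp add: card_gt_0_iff)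
    show ?thesis
    proof (cases "n \<ge> 1")
      case True
      have "real (card {G \<in> slice \<A> n. m < kappa_plus G \<C>}) / real (card (slice \<A> n))
            \<le> measure_pmf.prob (poisson_pmf 1) {k. m \<le> k}"
        using main_m[OF True, of m] cpos by (simp add: divide_le_eq mult.commute)
      then show ?thesis unfolding lhs r1 .
    next
      case False
      then have e: "{G \<in> slice \<A> n. m < kappa_plus G \<C>} = {}" using kp_le_n by force
      show ?thesis unfolding lhs e by simp
    qed
  qed
qed

end
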